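(* Let $\alpha,\beta>0$ with $\beta\neq\alpha$, and set $\tau=(\beta-\alpha)^{-1}$. Let $S_0>0$, $I_0\ge 0$, $R_0$ be real numbers with $S_0+I_0+R_0=1$. Then the solution of the system $$\dot S=-\frac{\beta SI}{S+I},\qquad \dot I=\frac{\beta SI}{S+I}-\alpha I,\qquad \dot R=\alpha I$$ with initial conditions $S(0)=S_0$, $I(0)=I_0$, $R(0)=R_0$ is given by $$S(t)=S_0\left(\frac{S_0+I_0}{S_0+I_0e^{t/\tau}}\right)^{\beta\tau},\qquad I(t)=I_0\left(\frac{S_0+I_0}{S_0+I_0e^{t/\tau}}\right)^{\beta\tau}e^{t/\tau},\qquad R(t)=1-\frac{(S_0+I_0)^{\beta\tau}}{(S_0+I_0e^{t/\tau})^{\beta\tau-1}}.$$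
   Context: This is the "modified SIR" epidemiological model, in which $S,I,R$ denote the fractions of susceptible, infective and recovered (removed) individuals; the total population $S+I+R$ is conserved and normalized to $1$. *)

theory Defs
  imports Complex_Main
begin

end

theory Submission
  imports Defs "HOL-Analysis.Analysis"
begin

lemma P_deriv:
  fixes \<beta> S0 I0 \<tau> t :: real
  assumes "\<beta> > 0" "S0 > 0" "I0 \<ge> 0" "\<tau> \<noteq> 0"
  defines "P \<equiv> (\<lambda>t. ((S0 + I0) / (S0 + I0 * exp (t / \<tau>))) powr (\<beta> * \<tau>))"
  shows "(P has_real_derivative (- \<beta> * P t * I0 * exp (t / \<tau>) / (S0 + I0 * exp (t / \<tau>)))) (at t)"
proof -
  have D: "\<And>t. S0 + I0 * exp (t / \<tau>) > 0" using assms by (simp add: add_pos_nonneg)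
  have N: "S0 + I0 > 0" using assms by simp
  have Pe: "P = (\<lambda>t. exp ((\<beta> * \<tau>) * (ln (S0 + I0) - ln (S0 + I0 * exp (t / \<tau>)))))"
    unfolding P_def proof (rule ext)
    fix t show "((S0 + I0) / (S0 + I0 * exp (t / \<tau>))) powr (\<beta> * \<tau>) = exp ((\<beta> * \<tau>) * (ln (S0 + I0) - ln (S0 + I0 * exp (t / \<tau>))))"
      using D[of t] N by (simp add: powr_def ln_div)
  qed
  have "((\<lambda>t. exp ((\<beta> * \<tau>) * (ln (S0 + I0) - ln (S0 + I0 * exp (t / \<tau>))))) has_real_derivative
     exp ((\<beta> * \<tau>) * (ln (S0 + I0) - ln (S0 + I0 * exp (t / \<tau>)))) * ((\<beta> * \<tau>) * (0 - (0 + I0 * (exp (t / \<tau>) * (1 / \<tau>))) / (S0 + I0 * exp (t / \<tau>))))) (at t)"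
    using D[of t] assms(4) by (intro derivative_eq_intros refl) auto
  moreover have eq: "\<And>X e d. d > 0 \<Longrightarrow> X * ((\<beta> * \<tau>) * (0 - (0 + I0 * (e * (1 / \<tau>))) / d)) = - \<beta> * X * I0 * e / d"
    using assms(4) by (simp add: field_simps)
  ultimately show ?thesis unfolding Pe by (simp only: eq[OF D[of t]])
qed

theorem mainTheorem1:
  fixes \<alpha> \<beta> S0 I0 R0 :: real
  assumes "\<alpha> > 0" and "\<beta> > 0" and "\<beta> \<noteq> \<alpha>"
    and "S0 > 0" and "I0 \<ge> 0" and "S0 + I0 + R0 = 1"
  defines "\<tau> \<equiv> 1 / (\<beta> - \<alpha>)"
  defines "Sx \<equiv> (\<lambda>t. S0 * ((S0 + I0) / (S0 + I0 * exp (t / \<tau>))) powr (\<beta> * \<tau>))"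
      and "Ix \<equiv> (\<lambda>t. I0 * ((S0 + I0) / (S0 + I0 * exp (t / \<tau>))) powr (\<beta> * \<tau>) * exp (t / \<tau>))"
      and "Rx \<equiv> (\<lambda>t. 1 - (S0 + I0) powr (\<beta> * \<tau>) / (S0 + I0 * exp (t / \<tau>)) powr (\<beta> * \<tau> - 1))"
  shows
    "(Sx 0 = S0 \<and> Ix 0 = I0 \<and> Rx 0 = R0 \<and>
      (\<forall>t\<ge>0.
        (Sx has_real_derivative (- \<beta> * Sx t * Ix t / (Sx t + Ix t))) (at t within {0..}) \<and>
        (Ix has_real_derivative (\<beta> * Sx t * Ix t / (Sx t + Ix t) - \<alpha> * Ix t)) (at t within {0..}) \<and>
        (Rx has_real_derivative (\<alpha> * Ix t)) (at t within {0..})))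
     \<and>
     (\<forall>S I R :: real \<Rightarrow> real.
        S 0 = S0 \<and> I 0 = I0 \<and> R 0 = R0 \<and>
        (\<forall>t\<ge>0.
          (S has_real_derivative (- \<beta> * S t * I t / (S t + I t))) (at t within {0..}) \<and>
          (I has_real_derivative (\<beta> * S t * I t / (S t + I t) - \<alpha> * I t)) (at t within {0..}) \<and>
          (R has_real_derivative (\<alpha> * I t)) (at t within {0..}))
        \<longrightarrow> (\<forall>t\<ge>0. S t = Sx t \<and> I t = Ix t \<and> R t = Rx t))"
proof -
  have tau: "\<tau> \<noteq> 0" using assms(3) by (simp add: \<tau>_def)
  have itau: "1 / \<tau> = \<beta> - \<alpha>" by (simp add: \<tau>_def)
  define E where "E = (\<lambda>t::real. exp (t / \<tau>))"
  define D where "D = (\<lambda>t::real. S0 + I0 * E t)"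
  define P where "P = (\<lambda>t. ((S0 + I0) / D t) powr (\<beta> * \<tau>))"
  have N0: "S0 + I0 > 0" using assms by simp
  have Epos: "\<And>t. E t > 0" by (simp add: E_def)
  have Dpos: "\<And>t. D t > 0"
  proof -
    fix t show "D t > 0" unfolding D_def using assms(4,5) Epos[of t]
      by (simp add: add_pos_nonneg)
  qed
  have Ppos: "\<And>t. P t > 0"
  proof -
    fix t show "P t > 0" unfolding P_def using Dpos[of t] N0 by simp
  qed
  have Sx_eq: "Sx = (\<lambda>t. S0 * P t)" by (simp add: Sx_def P_def D_def E_def)
  have Ix_eq: "Ix = (\<lambda>t. I0 * P t * E t)" by (simp add: Ix_def P_def D_def E_def)
  have sum: "\<And>t. Sx t + Ix t = P t * D t" by (simp add: Sx_eq Ix_eq D_def algebra_simps)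
  have Rx_eq: "Rx = (\<lambda>t. 1 - Sx t - Ix t)"
  proof (rule ext)
    fix t
    have "(S0 + I0) powr (\<beta> * \<tau>) / D t powr (\<beta> * \<tau> - 1) = P t * D t"
      unfolding P_def using Dpos[of t] N0 by (simp add: powr_diff powr_divide)
    then show "Rx t = 1 - Sx t - Ix t" using sum[of t]
      by (simp add: Rx_def D_def E_def)
  qed
  have dE: "\<And>t. (E has_real_derivative E t * (\<beta> - \<alpha>)) (at t)"
  proof -
    fix t
    have "(E has_real_derivative E t * (1 / \<tau>)) (at t)" unfolding E_def
      using tau by (auto intro!: derivative_eq_intros)
    then show "(E has_real_derivative E t * (\<beta> - \<alpha>)) (at t)" by (simp only: itau)
  qed
  have dP: "\<And>t. (P has_real_derivative (- \<beta> * P t * I0 * E t / D t)) (at t)"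
    using P_deriv[OF assms(2,4,5) tau] unfolding P_def D_def E_def by simp
  have dSx: "\<And>t. (Sx has_real_derivative (- \<beta> * Sx t * Ix t / (Sx t + Ix t))) (at t)"
  proof -
    fix t
    have "(Sx has_real_derivative S0 * (- \<beta> * P t * I0 * E t / D t)) (at t)"
      unfolding Sx_eq by (rule DERIV_cmult[OF dP])
    moreover have "S0 * (- \<beta> * P t * I0 * E t / D t) = - \<beta> * Sx t * Ix t / (Sx t + Ix t)"
      unfolding sum using Ppos[of t] Dpos[of t] by (simp add: Sx_eq Ix_eq field_simps)
    ultimately show "?thesis t" by simp
  qed
  have dIx: "\<And>t. (Ix has_real_derivative (\<beta> * Sx t * Ix t / (Sx t + Ix t) - \<alpha> * Ix t)) (at t)"
  proof -
    fix t
    have "(Ix has_real_derivative I0 * (- \<beta> * P t * I0 * E t / D t) * E t + E t * (\<beta> - \<alpha>) * (I0 * P t)) (at t)"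
      unfolding Ix_eq by (rule DERIV_mult[OF DERIV_cmult[OF dP] dE])
    moreover have "I0 * (- \<beta> * P t * I0 * E t / D t) * E t + E t * (\<beta> - \<alpha>) * (I0 * P t)
       = \<beta> * Sx t * Ix t / (P t * D t) - \<alpha> * Ix t"
      using Ppos[of t] Dpos[of t] by (simp add: Sx_eq Ix_eq field_simps) (simp add: D_def algebra_simps)
    ultimately show "?thesis t" using sum[of t] by simp
  qed
  have dRx: "\<And>t. (Rx has_real_derivative (\<alpha> * Ix t)) (at t)"
  proof -
    fix t
    have "(Rx has_real_derivative 0 - (- \<beta> * Sx t * Ix t / (Sx t + Ix t)) - (\<beta> * Sx t * Ix t / (Sx t + Ix t) - \<alpha> * Ix t)) (at t)"
      unfolding Rx_eq by (rule DERIV_diff[OF DERIV_diff[OF DERIV_const dSx] dIx])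
    then show "?thesis t" by simp
  qed
  have E0: "E 0 = 1" by (simp add: E_def)
  have P0: "P 0 = 1" using N0 by (simp add: P_def D_def E0)
  have init: "Sx 0 = S0" "Ix 0 = I0" "Rx 0 = R0"
    using assms(6) by (simp_all add: Sx_eq Ix_eq Rx_eq P0 E0)
  have part1: "Sx 0 = S0 \<and> Ix 0 = I0 \<and> Rx 0 = R0 \<and>
      (\<forall>t\<ge>0.
        (Sx has_real_derivative (- \<beta> * Sx t * Ix t / (Sx t + Ix t))) (at t within {0..}) \<and>
        (Ix has_real_derivative (\<beta> * Sx t * Ix t / (Sx t + Ix t) - \<alpha> * Ix t)) (at t within {0..}) \<and>
        (Rx has_real_derivative (\<alpha> * Ix t)) (at t within {0..}))"
    using init dSx dIx dRx by (simp add: has_field_derivative_at_within)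
  have Sxpos: "\<And>t. Sx t > 0" using Ppos assms(4) by (simp add: Sx_eq)
  have Ixnn: "\<And>t. Ix t \<ge> 0" using Ppos Epos assms(5) by (simp add: Ix_eq less_imp_le)
  have dSx2: "\<And>t. (Sx has_real_derivative S0 * (- \<beta> * P t * I0 * E t / D t)) (at t)"
    unfolding Sx_eq by (rule DERIV_cmult[OF dP])
  have cSx: "continuous_on A Sx" for A using dSx
    by (intro continuous_at_imp_continuous_on ballI DERIV_isCont) blast
  have cIx: "continuous_on A Ix" for A using dIx
    by (intro continuous_at_imp_continuous_on ballI DERIV_isCont) blast
  have part2: "\<forall>S I R :: real \<Rightarrow> real.
        S 0 = S0 \<and> I 0 = I0 \<and> R 0 = R0 \<and>
        (\<forall>t\<ge>0.
          (S has_real_derivative (- \<beta> * S t * I t / (S t + I t))) (at t within {0..}) \<and>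
          (I has_real_derivative (\<beta> * S t * I t / (S t + I t) - \<alpha> * I t)) (at t within {0..}) \<and>
          (R has_real_derivative (\<alpha> * I t)) (at t within {0..}))
        \<longrightarrow> (\<forall>t\<ge>0. S t = Sx t \<and> I t = Ix t \<and> R t = Rx t)"
  proof (rule allI, rule allI, rule allI, rule impI)
    fix S I R :: "real \<Rightarrow> real"
    assume H: "S 0 = S0 \<and> I 0 = I0 \<and> R 0 = R0 \<and>
        (\<forall>t\<ge>0.
          (S has_real_derivative (- \<beta> * S t * I t / (S t + I t))) (at t within {0..}) \<and>
          (I has_real_derivative (\<beta> * S t * I t / (S t + I t) - \<alpha> * I t)) (at t within {0..}) \<and>
          (R has_real_derivative (\<alpha> * I t)) (at t within {0..}))"
    have S0': "S 0 = S0" and I0': "I 0 = I0" and R0': "R 0 = R0" using H by auto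
    have dS: "\<And>t. t \<ge> 0 \<Longrightarrow> (S has_real_derivative (- \<beta> * S t * I t / (S t + I t))) (at t within {0..})"
      using H by blast
    have dI: "\<And>t. t \<ge> 0 \<Longrightarrow> (I has_real_derivative (\<beta> * S t * I t / (S t + I t) - \<alpha> * I t)) (at t within {0..})"
      using H by blast
    have dR: "\<And>t. t \<ge> 0 \<Longrightarrow> (R has_real_derivative (\<alpha> * I t)) (at t within {0..})"
      using H by blast
    have cS: "continuous_on {0..} S"
      apply (rule DERIV_continuous_on[where D="\<lambda>t. - \<beta> * S t * I t / (S t + I t)"])
      using dS by auto
    have cI: "continuous_on {0..} I"
      apply (rule DERIV_continuous_on[where D="\<lambda>t. \<beta> * S t * I t / (S t + I t) - \<alpha> * I t"])
      using dI by auto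
    have key: "S x = Sx x \<and> I x = Ix x"
      if b0: "0 \<le> b" and pos: "\<forall>s\<in>{0..b}. S s > 0 \<and> S s + I s > 0" and x: "x \<in> {0..b}" for b x
    proof -
      define f where "f = (\<lambda>s. I s / (S s * E s))"
      have "\<exists>c. \<forall>s\<in>{0..b}. f s = c"
      proof (rule has_field_derivative_zero_constant)
        show "convex {0..b}" by (simp add: convex_real_interval)
      next
        fix s assume s: "s \<in> {0..b}"
        have Ss: "S s > 0" "S s + I s > 0" using pos s by auto
        have d1: "(S has_real_derivative (- \<beta> * S s * I s / (S s + I s))) (at s within {0..b})"
          using DERIV_subset[OF dS[of s]] s by auto
        have d2: "(I has_real_derivative (\<beta> * S s * I s / (S s + I s) - \<alpha> * I s)) (at s within {0..b})"
          using DERIV_subset[OF dI[of s]] s by auto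
        have d3: "(E has_real_derivative E s * (\<beta> - \<alpha>)) (at s within {0..b})"
          using dE has_field_derivative_at_within by blast
        have "(f has_real_derivative
            ((\<beta> * S s * I s / (S s + I s) - \<alpha> * I s) * (S s * E s) - I s * ((- \<beta> * S s * I s / (S s + I s)) * E s + E s * (\<beta> - \<alpha>) * S s)) / ((S s * E s) * (S s * E s))) (at s within {0..b})"
          unfolding f_def using Ss Epos[of s] by (intro DERIV_divide[OF d2 DERIV_mult[OF d1 d3]]) auto
        moreover have "((\<beta> * S s * I s / (S s + I s) - \<alpha> * I s) * (S s * E s) - I s * ((- \<beta> * S s * I s / (S s + I s)) * E s + E s * (\<beta> - \<alpha>) * S s)) = 0"
          using Ss Epos[of s] by (simp add: field_simps)
        ultimately show "(f has_real_derivative 0) (at s within {0..b})" by simp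
      qed
      then obtain c where c: "\<forall>s\<in>{0..b}. f s = c" by blast
      have "f 0 = I0 / S0" using S0' I0' E0 by (simp add: f_def)
      hence fc: "\<forall>s\<in>{0..b}. f s = I0 / S0" using c b0 by auto
      have Irel: "I s = I0 * S s * E s / S0" if s: "s \<in> {0..b}" for s
      proof -
        have "I s / (S s * E s) = I0 / S0" using fc s by (simp add: f_def)
        moreover have "S s > 0" using pos s by auto
        ultimately show ?thesis using Epos[of s] assms(4) by (simp add: field_simps)
      qed
      define g where "g = (\<lambda>s. S s / Sx s)"
      have "\<exists>c. \<forall>s\<in>{0..b}. g s = c"
      proof (rule has_field_derivative_zero_constant)
        show "convex {0..b}" by (simp add: convex_real_interval)
      next
        fix s assume s: "s \<in> {0..b}"
        have Ss: "S s > 0" "S s + I s > 0" using pos s by auto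
        have d1: "(S has_real_derivative (- \<beta> * S s * I s / (S s + I s))) (at s within {0..b})"
          using DERIV_subset[OF dS[of s]] s by auto
        have d3: "(Sx has_real_derivative S0 * (- \<beta> * P s * I0 * E s / D s)) (at s within {0..b})"
          using dSx2 has_field_derivative_at_within by blast
        have "(g has_real_derivative
            ((- \<beta> * S s * I s / (S s + I s)) * Sx s - S s * (S0 * (- \<beta> * P s * I0 * E s / D s))) / (Sx s * Sx s)) (at s within {0..b})"
          unfolding g_def using Sxpos[of s] by (intro DERIV_divide[OF d1 d3]) auto
        moreover have rel: "S s * I s / (S s + I s) = S s * I0 * E s / D s"
        proof -
          have "S s + I s = S s * D s / S0" using Irel[OF s] assms(4) by (simp add: D_def field_simps)
          then have "S s * I s / (S s + I s) = S s * I s / (S s * D s / S0)" by (simp only:)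
          also have "\<dots> = S s * (I0 * S s * E s / S0) / (S s * D s / S0)" by (simp only: Irel[OF s])
          also have "\<dots> = S s * I0 * E s / D s" using Ss assms(4) Dpos[of s] by (simp add: field_simps)
          finally show ?thesis .
        qed
        moreover have "((- \<beta> * S s * I s / (S s + I s)) * Sx s - S s * (S0 * (- \<beta> * P s * I0 * E s / D s))) = 0"
        proof -
          have "- \<beta> * S s * I s / (S s + I s) = - \<beta> * (S s * I s / (S s + I s))" by simp
          also have "\<dots> = - \<beta> * (S s * I0 * E s / D s)" by (simp only: rel)
          finally have e: "- \<beta> * S s * I s / (S s + I s) = - \<beta> * (S s * I0 * E s / D s)" .
          show ?thesis unfolding e using Dpos[of s] by (simp add: Sx_eq field_simps)
        qed
        ultimately show "(g has_real_derivative 0) (at s within {0..b})" by simp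
      qed
      then obtain c where c: "\<forall>s\<in>{0..b}. g s = c" by blast
      have "g 0 = 1" using S0' init assms(4) by (simp add: g_def)
      hence "g x = 1" using c b0 x by auto
      hence Sxx: "S x = Sx x" using Sxpos[of x] by (simp add: g_def)
      moreover have "I x = Ix x" using Irel[OF x] Sxx assms(4) by (simp add: Sx_eq Ix_eq)
      ultimately show ?thesis by simp
    qed
    show "\<forall>t\<ge>0. S t = Sx t \<and> I t = Ix t \<and> R t = Rx t"
    proof (intro allI impI)
      fix t0 :: real assume t0: "t0 \<ge> 0"
      define g where "g = (\<lambda>s. min (S s) (S s + I s))"
      have cS': "continuous_on {0..t0} S" using cS by (rule continuous_on_subset) auto
      have cI': "continuous_on {0..t0} I" using cI by (rule continuous_on_subset) auto
      have cg: "continuous_on {0..t0} g" unfolding g_def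
        by (intro continuous_on_min continuous_on_add cS' cI')
      have posall: "\<forall>s\<in>{0..t0}. S s > 0 \<and> S s + I s > 0"
      proof (rule ccontr)
        assume neg: "\<not> (\<forall>s\<in>{0..t0}. S s > 0 \<and> S s + I s > 0)"
        define K where "K = {0..t0} \<inter> g -` {..0}"
        have Kne: "K \<noteq> {}" using neg by (auto simp: K_def g_def)
        have Kcl: "closed K" unfolding K_def
          by (rule continuous_closed_preimage[OF cg]) auto
        have bdd: "bdd_below K" unfolding K_def by (rule bdd_belowI[of _ 0]) auto
        define s1 where "s1 = Inf K"
        have s1K: "s1 \<in> K" unfolding s1_def using closed_contains_Inf[OF Kne bdd Kcl] .
        have g0: "g 0 > 0" using S0' I0' assms(4,5) by (simp add: g_def)
        have s1pos: "s1 > 0"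
        proof -
          have "s1 \<ge> 0" "g s1 \<le> 0" using s1K by (auto simp: K_def)
          then show ?thesis using g0 by (cases "s1 = 0") auto
        qed
        have below: "S s = Sx s \<and> I s = Ix s" if s: "s \<in> {0..<s1}" for s
        proof (rule key[of s])
          show "0 \<le> s" using s by simp
          show "s \<in> {0..s}" using s by simp
          show "\<forall>r\<in>{0..s}. S r > 0 \<and> S r + I r > 0"
          proof
            fix r assume r: "r \<in> {0..s}"
            have "s1 \<le> t0" using s1K by (auto simp: K_def)
            have "r \<notin> K"
            proof
              assume "r \<in> K"
              then have "s1 \<le> r" unfolding s1_def using bdd by (rule cInf_lower)
              then show False using r s by auto
            qed
            then have "g r > 0" using r s \<open>s1 \<le> t0\<close> by (auto simp: K_def)
            then show "S r > 0 \<and> S r + I r > 0" by (simp add: g_def)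
          qed
        qed
        have s1t0: "s1 \<le> t0" using s1K by (auto simp: K_def)
        have eqcl: "F s1 = G s1" if cF: "continuous_on {0..s1} F" and cG: "continuous_on {0..s1} G"
          and eq: "\<And>s. s \<in> {0..<s1} \<Longrightarrow> F s = G s" for F G :: "real \<Rightarrow> real"
        proof -
          have cl: "closed ({0..s1} \<inter> (\<lambda>s. F s - G s) -` {0})"
            by (rule continuous_closed_preimage) (auto intro!: continuous_intros cF cG)
          have "{0..<s1} \<subseteq> {0..s1} \<inter> (\<lambda>s. F s - G s) -` {0}" using eq by auto
          then have "closure {0..<s1} \<subseteq> {0..s1} \<inter> (\<lambda>s. F s - G s) -` {0}"
            by (rule closure_minimal[OF _ cl])
          then have "s1 \<in> {0..s1} \<inter> (\<lambda>s. F s - G s) -` {0}" using s1pos by (auto simp: subset_iff)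
          then show ?thesis by simp
        qed
        have "S s1 = Sx s1"
          by (rule eqcl) (use below cS cSx s1pos in \<open>auto intro: continuous_on_subset\<close>)
        moreover have "I s1 = Ix s1"
          by (rule eqcl) (use below cI cIx s1pos in \<open>auto intro: continuous_on_subset\<close>)
        ultimately have "g s1 > 0" using Sxpos[of s1] Ixnn[of s1] by (simp add: g_def add_pos_nonneg)
        then show False using s1K by (auto simp: K_def)
      qed
      have SI: "\<And>s. s \<in> {0..t0} \<Longrightarrow> S s = Sx s \<and> I s = Ix s"
        using key[OF t0 posall] by blast
      define r where "r = (\<lambda>s. R s - Rx s)"
      have "\<exists>c. \<forall>s\<in>{0..t0}. r s = c"
      proof (rule has_field_derivative_zero_constant)
        show "convex {0..t0}" by (simp add: convex_real_interval)
      next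
        fix s assume s: "s \<in> {0..t0}"
        have d1: "(R has_real_derivative (\<alpha> * I s)) (at s within {0..t0})"
          using DERIV_subset[OF dR[of s]] s by auto
        have d2: "(Rx has_real_derivative (\<alpha> * Ix s)) (at s within {0..t0})"
          using dRx has_field_derivative_at_within by blast
        have "(r has_real_derivative (\<alpha> * I s - \<alpha> * Ix s)) (at s within {0..t0})"
          unfolding r_def by (rule DERIV_diff[OF d1 d2])
        then show "(r has_real_derivative 0) (at s within {0..t0})" using SI[OF s] by simp
      qed
      then obtain c where c: "\<forall>s\<in>{0..t0}. r s = c" by blast
      have "r 0 = 0" using R0' init by (simp add: r_def)
      then have "r t0 = 0" using c t0 by auto
      then show "S t0 = Sx t0 \<and> I t0 = Ix t0 \<and> R t0 = Rx t0"
        using SI[of t0] t0 by (simp add: r_def)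
    qed
  qed
  show ?thesis using part1 part2 by blast
qed

end
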